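(* Let $T>0$ and let $\mathbb T$ be a nonempty closed $T$-periodic time scale. Then for every $x\in C^1_T$, $$\|x-\overline x\|_\infty\le \tfrac T2\,\|x^\Delta\|_\infty,$$ so that $k(\mathbb T)\le T/2$.
   Context: Time scale calculus in the sense of Hilger: $x^\Delta$ is the $\Delta$-derivative and $\int\cdot\,\Delta t$ the $\Delta$-integral. $\mathbb T$ is $T$-periodic if $\mathbb T+T=\mathbb T$. $C^1_T$ is the space of continuous $T$-periodic functions $x:\mathbb T\to\mathbb R$ that are $\Delta$-differentiable with continuous $\Delta$-derivative; $\|x\|_\infty=\sup_{[0,T]\cap\mathbb T}|x|$; $\overline x=\frac1T\int_0^Tx(t)\Delta t$. $k(\mathbb T)$ denotes the smallest constant $k\ge0$ such that $\|x-\overline x\|_\infty\le k\|x^\Delta\|_\infty$ for all $x\in C^1_T$. *)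

theory Defs
  imports "HOL-Analysis.Analysis"
begin

definition time_scale :: "real set \<Rightarrow> bool" where
  "time_scale TS \<longleftrightarrow> TS \<noteq> {} \<and> closed TS"

text \<open>Forward jump operator (convention: inf of the empty set is sup TS,
i.e. sigma t = t at a maximum) and backward jump operator.\<close>
definition fjump :: "real set \<Rightarrow> real \<Rightarrow> real" where
  "fjump TS t = (if {s\<in>TS. s > t} = {} then t else Inf {s\<in>TS. s > t})"

definition bjump :: "real set \<Rightarrow> real \<Rightarrow> real" where
  "bjump TS t = (if {s\<in>TS. s < t} = {} then t else Sup {s\<in>TS. s < t})"

definition tkappa :: "real set \<Rightarrow> real set" where
  "tkappa TS = {t\<in>TS. \<not> ((\<forall>s\<in>TS. s \<le> t) \<and> bjump TS t < t)}"

definition has_delta_derivative :: "real set \<Rightarrow> (real \<Rightarrow> real) \<Rightarrow> real \<Rightarrow> real \<Rightarrow> bool" where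
  "has_delta_derivative TS f D t \<longleftrightarrow>
     (\<forall>\<epsilon>>0. \<exists>\<delta>>0. \<forall>s\<in>TS. \<bar>s - t\<bar> < \<delta> \<longrightarrow>
        \<bar>(f (fjump TS t) - f s) - D * (fjump TS t - s)\<bar> \<le> \<epsilon> * \<bar>fjump TS t - s\<bar>)"

definition delta_deriv :: "real set \<Rightarrow> (real \<Rightarrow> real) \<Rightarrow> real \<Rightarrow> real" where
  "delta_deriv TS f t = (SOME D. has_delta_derivative TS f D t)"

definition delta_antideriv :: "real set \<Rightarrow> (real \<Rightarrow> real) \<Rightarrow> (real \<Rightarrow> real) \<Rightarrow> bool" where
  "delta_antideriv TS F f \<longleftrightarrow> (\<forall>t\<in>tkappa TS. has_delta_derivative TS F (f t) t)"

definition delta_integral :: "real set \<Rightarrow> (real \<Rightarrow> real) \<Rightarrow> real \<Rightarrow> real \<Rightarrow> real" where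
  "delta_integral TS f a b = (SOME I. \<exists>F. delta_antideriv TS F f \<and> I = F b - F a)"

definition periodic_ts :: "real set \<Rightarrow> real \<Rightarrow> bool" where
  "periodic_ts TS T \<longleftrightarrow> (\<lambda>t. t + T) ` TS = TS"

definition C1T :: "real set \<Rightarrow> real \<Rightarrow> (real \<Rightarrow> real) set" where
  "C1T TS T = {x. continuous_on TS x \<and> (\<forall>t\<in>TS. x (t + T) = x t) \<and>
      (\<forall>t\<in>tkappa TS. \<exists>D. has_delta_derivative TS x D t) \<and>
      continuous_on (tkappa TS) (delta_deriv TS x)}"

definition sup_norm :: "real set \<Rightarrow> real \<Rightarrow> (real \<Rightarrow> real) \<Rightarrow> real" where
  "sup_norm TS T f = Sup ((\<lambda>t. \<bar>f t\<bar>) ` ({0..T} \<inter> TS))"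

definition ts_mean :: "real set \<Rightarrow> real \<Rightarrow> (real \<Rightarrow> real) \<Rightarrow> real" where
  "ts_mean TS T x = delta_integral TS x 0 T / T"

definition k_const :: "real set \<Rightarrow> real \<Rightarrow> real" where
  "k_const TS T = Inf {k. k \<ge> 0 \<and> (\<forall>x\<in>C1T TS T.
      sup_norm TS T (\<lambda>t. x t - ts_mean TS T x) \<le> k * sup_norm TS T (delta_deriv TS x))}"

end

theory Submission
  imports Defs
begin


lemma zero_of_eps:
  fixes X c :: real
  assumes "\<And>e. e > 0 \<Longrightarrow> \<bar>X\<bar> \<le> e * c" "c \<ge> 0"
  shows "X = 0"
proof (rule ccontr)
  assume "X \<noteq> 0"
  then have "c > 0" using assms(1)[of 1] assms(2) by auto
  have "\<bar>X\<bar> \<le> (\<bar>X\<bar> / (2*c)) * c" using assms(1)[of "\<bar>X\<bar> / (2*c)"] \<open>X \<noteq> 0\<close> \<open>c>0\<close> by auto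
  also have "\<dots> = \<bar>X\<bar>/2" using \<open>c>0\<close> by (simp add: field_simps)
  finally show False using \<open>X \<noteq> 0\<close> by auto
qed

lemma delta_exact:
  assumes "has_delta_derivative TS f D t" "t \<in> TS"
  shows "f (fjump TS t) - f t = D * (fjump TS t - t)"
proof -
  have "\<bar>f (fjump TS t) - f t - D * (fjump TS t - t)\<bar> \<le> e * \<bar>fjump TS t - t\<bar>" if "e>0" for e
  proof -
    obtain d where "d>0" "\<forall>s\<in>TS. \<bar>s - t\<bar> < d \<longrightarrow>
        \<bar>(f (fjump TS t) - f s) - D * (fjump TS t - s)\<bar> \<le> e * \<bar>fjump TS t - s\<bar>"
      using assms(1) \<open>e>0\<close> unfolding has_delta_derivative_def by blast
    then show ?thesis using assms(2) by auto
  qed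
  from zero_of_eps[OF this] show ?thesis by auto
qed

lemma delta_neg:
  assumes "has_delta_derivative TS f D t"
  shows "has_delta_derivative TS (\<lambda>x. - f x) (- D) t"
  using assms unfolding has_delta_derivative_def
  by (metis (no_types, lifting) abs_minus_cancel minus_diff_eq mult_minus_left minus_diff_minus)

lemma delta_cont:
  assumes "has_delta_derivative TS f D t" "t \<in> TS" "\<eta> > 0"
  shows "\<exists>\<delta>>0. \<forall>s\<in>TS. \<bar>s - t\<bar> < \<delta> \<longrightarrow> \<bar>f s - f t\<bar> \<le> \<eta>"
proof -
  define \<sigma> where "\<sigma> = fjump TS t"
  define e where "e = \<eta> / (2 * (\<bar>\<sigma> - t\<bar> + 1))"
  have e: "e > 0" using assms(3) unfolding e_def by (intro divide_pos_pos) (auto intro: add_nonneg_pos)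
  obtain d where d: "d>0" "\<forall>s\<in>TS. \<bar>s - t\<bar> < d \<longrightarrow>
        \<bar>(f \<sigma> - f s) - D * (\<sigma> - s)\<bar> \<le> e * \<bar>\<sigma> - s\<bar>"
    using assms(1) e unfolding has_delta_derivative_def \<sigma>_def by blast
  have ex: "f \<sigma> - f t = D * (\<sigma> - t)" using delta_exact[OF assms(1,2)] \<sigma>_def by simp
  define \<delta> where "\<delta> = min (min d 1) (\<eta> / (2 * (\<bar>D\<bar> + 1)))"
  have "\<delta> > 0" using d assms(3) by (simp add: \<delta>_def add_pos_nonneg)
  moreover have "\<bar>f s - f t\<bar> \<le> \<eta>" if s: "s \<in> TS" "\<bar>s - t\<bar> < \<delta>" for s
  proof -
    have E: "\<bar>(f \<sigma> - f s) - D * (\<sigma> - s)\<bar> \<le> e * \<bar>\<sigma> - s\<bar>" using d s by (auto simp: \<delta>_def)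
    have "f t - f s = ((f \<sigma> - f s) - D * (\<sigma> - s)) + D * (t - s)" using ex by (simp add: algebra_simps)
    then have "\<bar>f s - f t\<bar> \<le> e * \<bar>\<sigma> - s\<bar> + \<bar>D\<bar> * \<bar>t - s\<bar>" using E abs_mult[of D "t-s"]
      by linarith
    also have "e * \<bar>\<sigma> - s\<bar> \<le> e * (\<bar>\<sigma> - t\<bar> + 1)" using s e by (intro mult_left_mono) (auto simp: \<delta>_def)
    also have "\<dots> = \<eta>/2"
    proof -
      have "\<bar>\<sigma> - t\<bar> + 1 \<noteq> 0" using abs_ge_zero[of "\<sigma> - t"] by linarith
      moreover have "\<And>c::real. c \<noteq> 0 \<Longrightarrow> \<eta> / (2 * c) * c = \<eta> / 2" by simp
      ultimately show ?thesis unfolding e_def by blast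
    qed
    also have "\<bar>D\<bar> * \<bar>t - s\<bar> \<le> (\<bar>D\<bar> + 1) * (\<eta> / (2 * (\<bar>D\<bar> + 1)))"
      using s by (intro mult_mono) (auto simp: \<delta>_def abs_minus_commute)
    also have "\<dots> = \<eta>/2" by (simp add: field_simps add_pos_nonneg)
    finally show ?thesis by simp
  qed
  ultimately show ?thesis by blast
qed

lemma fjump_props:
  assumes "closed TS" "t \<in> TS" "\<exists>s\<in>TS. s > t"
  shows "fjump TS t \<in> TS" "t \<le> fjump TS t" "\<And>v. v \<in> TS \<Longrightarrow> v > t \<Longrightarrow> fjump TS t \<le> v"
proof -
  let ?S = "{s\<in>TS. s > t}"
  have ne: "?S \<noteq> {}" using assms(3) by auto
  have bb: "bdd_below ?S" by (rule bdd_belowI[of _ t]) auto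
  have fj: "fjump TS t = Inf ?S" unfolding fjump_def by (rule if_not_P[OF ne])
  show "t \<le> fjump TS t" unfolding fj by (rule cInf_greatest[OF ne]) auto
  show "\<And>v. v \<in> TS \<Longrightarrow> v > t \<Longrightarrow> fjump TS t \<le> v" unfolding fj by (rule cInf_lower) (auto intro: bb)
  have "Inf ?S \<in> closure ?S" by (rule closure_contains_Inf[OF ne bb])
  also have "closure ?S \<subseteq> TS" using assms(1) by (metis (no_types, lifting) closure_minimal mem_Collect_eq subsetI)
  finally show "fjump TS t \<in> TS" unfolding fj .
qed

lemma fjump_eq:
  assumes "closed TS" "t \<in> TS" "c \<in> TS" "c > t" "\<And>v. v \<in> TS \<Longrightarrow> v > t \<Longrightarrow> c \<le> v"
  shows "fjump TS t = c"
proof -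
  let ?S = "{s\<in>TS. s > t}"
  have ne: "?S \<noteq> {}" using assms(3,4) by auto
  have bb: "bdd_below ?S" by (rule bdd_belowI[of _ t]) auto
  have fj: "fjump TS t = Inf ?S" unfolding fjump_def by (rule if_not_P[OF ne])
  have "Inf ?S \<le> c" by (rule cInf_lower) (use assms bb in auto)
  moreover have "c \<le> Inf ?S" by (rule cInf_greatest[OF ne]) (use assms in auto)
  ultimately show ?thesis using fj by simp
qed

lemma le_of_eps:
  fixes X c :: real
  assumes "\<And>e. e > 0 \<Longrightarrow> X \<le> e * c" "c \<ge> 0"
  shows "X \<le> 0"
proof (rule ccontr)
  assume "\<not> X \<le> 0"
  then have X: "X > 0" by simp
  then have "c > 0" using assms(1)[of 1] assms(2) by auto
  have "X \<le> (X / (2*c)) * c" using assms(1)[of "X / (2*c)"] X \<open>c>0\<close> by auto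
  also have "\<dots> = X/2" using \<open>c>0\<close> by (simp add: field_simps)
  finally show False using X by auto
qed

lemma delta_mvt_upper:
  assumes cl: "closed TS" and up: "\<forall>t\<in>TS. \<exists>s\<in>TS. s > t"
    and a: "a \<in> TS" "b \<in> TS" "a \<le> b"
    and der: "\<And>t. t \<in> TS \<Longrightarrow> a \<le> t \<Longrightarrow> t \<le> b \<Longrightarrow> \<exists>D. has_delta_derivative TS f D t \<and> D \<le> U"
  shows "f b - f a \<le> U * (b - a)"
proof -
  have main: "f b - f a \<le> (U + e) * (b - a)" if e: "e > 0" for e
  proof (rule ccontr)
    define K where "K = U + e"
    define B where "B = {u\<in>TS. a \<le> u \<and> u \<le> b \<and> f u - f a > K * (u - a)}"
    assume "\<not> f b - f a \<le> (U + e) * (b - a)"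
    then have bB: "b \<in> B" using a by (auto simp: B_def K_def)
    have neB: "B \<noteq> {}" using bB by auto
    have bbB: "bdd_below B" by (rule bdd_belowI[of _ a]) (auto simp: B_def)
    define c where "c = Inf B"
    have cclos: "c \<in> closure B" unfolding c_def by (rule closure_contains_Inf[OF neB bbB])
    have "closure B \<subseteq> TS \<inter> {a..b}" by (rule closure_minimal) (auto simp: B_def intro: closed_Int cl)
    with cclos have cT: "c \<in> TS" "a \<le> c" "c \<le> b" by auto
    have lowB: "\<And>u. u \<in> B \<Longrightarrow> c \<le> u" unfolding c_def by (rule cInf_lower[OF _ bbB])
    have good: "f u - f a \<le> K * (u - a)" if "u \<in> TS" "a \<le> u" "u < c" for u
    proof (rule ccontr)
      assume "\<not> ?thesis"
      then have "u \<in> B" using that cT by (auto simp: B_def)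
      then show False using lowB that by force
    qed
    show False
    proof (cases "c \<in> B")
      case False
      have cgood: "f c - f a \<le> K*(c-a)" using False cT by (auto simp: B_def)
      obtain D where D: "has_delta_derivative TS f D c" "D \<le> U" using der cT by blast
      obtain d where d: "d>0" "\<forall>s\<in>TS. \<bar>s - c\<bar> < d \<longrightarrow> \<bar>(f (fjump TS c) - f s) - D*(fjump TS c - s)\<bar> \<le> e * \<bar>fjump TS c - s\<bar>"
        using D(1) e unfolding has_delta_derivative_def by blast
      obtain s where s: "s \<in> B" "s < c + d" using cInf_less_iff[OF neB bbB, of "c+d"] d(1) c_def by auto
      have "s \<noteq> c" using s False by auto
      hence sc: "s > c" using lowB s by force
      have sT: "s \<in> TS" using s by (auto simp: B_def)
      have fjc: "fjump TS c = c"
      proof -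
        have "fjump TS c \<le> c"
        proof (rule ccontr)
          assume "\<not> ?thesis" hence gt: "fjump TS c > c" by simp
          obtain s' where s': "s' \<in> B" "s' < fjump TS c" using cInf_less_iff[OF neB bbB, of "fjump TS c"] gt c_def by auto
          have "s' \<noteq> c" using s' False by auto
          hence "s' > c" using lowB s' by force
          moreover have "s' \<in> TS" using s' by (auto simp: B_def)
          ultimately have "fjump TS c \<le> s'" using fjump_props(3)[OF cl cT(1)] up cT(1) by blast
          then show False using s' by simp
        qed
        then show ?thesis using fjump_props(2)[OF cl cT(1)] up cT(1) by force
      qed
      have "\<bar>(f c - f s) - D*(c - s)\<bar> \<le> e * \<bar>c - s\<bar>" using d(2) sT s sc fjc by auto
      then have "f s - f c \<le> D * (s - c) + e * (s - c)" using sc by (auto simp: algebra_simps)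
      also have "\<dots> \<le> K * (s - c)" using D(2) sc mult_nonneg_nonneg[of "U - D" "s - c"] by (simp add: K_def algebra_simps)
      finally have "f s - f a \<le> K * (s - a)" using cgood by (simp add: algebra_simps)
      then show False using s by (auto simp: B_def)
    next
      case True
      have "c \<noteq> a" using True by (auto simp: B_def)
      hence ca: "c > a" using cT by auto
      define L where "L = {u\<in>TS. a \<le> u \<and> u < c}"
      have neL: "L \<noteq> {}" using a ca by (auto simp: L_def)
      have baL: "bdd_above L" by (rule bdd_aboveI[of _ c]) (auto simp: L_def)
      define r where "r = Sup L"
      have "r \<in> closure L" unfolding r_def by (rule closure_contains_Sup[OF neL baL])
      also have "closure L \<subseteq> TS \<inter> {a..c}" by (rule closure_minimal) (auto simp: L_def intro: closed_Int cl)
      finally have rT: "r \<in> TS" "a \<le> r" "r \<le> c" by auto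
      have upL: "\<And>u. u \<in> L \<Longrightarrow> u \<le> r" unfolding r_def by (rule cSup_upper[OF _ baL])
      have cbad: "f c - f a > K*(c-a)" using True by (auto simp: B_def)
      show False
      proof (cases "r = c")
        case True
        define gap where "gap = f c - f a - K*(c-a)"
        have gap: "gap > 0" using cbad by (simp add: gap_def)
        obtain D where D: "has_delta_derivative TS f D c" using der cT by blast
        obtain \<delta> where \<delta>: "\<delta> > 0" "\<forall>s\<in>TS. \<bar>s - c\<bar> < \<delta> \<longrightarrow> \<bar>f s - f c\<bar> \<le> gap/3"
          using delta_cont[OF D cT(1), of "gap/3"] gap by auto
        define \<delta>' where "\<delta>' = min \<delta> (gap/(3*(\<bar>K\<bar>+1)))"
        have \<delta>': "\<delta>' > 0" using \<delta> gap unfolding \<delta>'_def by (auto intro!: divide_pos_pos add_nonneg_pos)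
        obtain u where u: "u \<in> L" "c - \<delta>' < u" using less_cSup_iff[OF neL baL, of "c - \<delta>'"] True r_def \<delta>' by auto
        have uT: "u \<in> TS" "a \<le> u" "u < c" using u by (auto simp: L_def)
        have g1: "f u - f a \<le> K * (u - a)" using good uT by blast
        have g2: "\<bar>f u - f c\<bar> \<le> gap/3" using \<delta>(2) uT u \<delta>' by (auto simp: \<delta>'_def)
        have "\<bar>K\<bar> * (c - u) \<le> (\<bar>K\<bar>+1) * (gap/(3*(\<bar>K\<bar>+1)))"
          using u uT by (intro mult_mono) (auto simp: \<delta>'_def)
        also have "\<dots> = gap/3"
        proof -
          have "\<And>z::real. z \<noteq> 0 \<Longrightarrow> z * (gap / (3*z)) = gap/3" by simp
          moreover have "\<bar>K\<bar>+1 \<noteq> 0" using abs_ge_zero[of K] by linarith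
          ultimately show ?thesis by blast
        qed
        finally have g3: "\<bar>K\<bar> * (c - u) \<le> gap/3" .
        have "K * (u - a) \<le> K * (c - a) + \<bar>K\<bar> * (c - u)"
        proof -
          have "K * (u - a) = K * (c - a) - K * (c - u)" by (simp add: algebra_simps)
          moreover have "- K * (c - u) \<le> \<bar>K\<bar> * (c - u)" using uT by (intro mult_right_mono) auto
          ultimately show ?thesis by simp
        qed
        then show False using g1 g2 g3 gap gap_def by linarith
      next
        case False
        hence rc: "r < c" using rT by simp
        have fjr: "fjump TS r = c"
        proof (rule fjump_eq[OF cl rT(1) cT(1) rc])
          fix v assume v: "v \<in> TS" "v > r"
          show "c \<le> v"
          proof (rule ccontr)
            assume "\<not> c \<le> v"
            then have "v \<in> L" using v rT by (auto simp: L_def)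
            then show False using upL v by force
          qed
        qed
        obtain D where D: "has_delta_derivative TS f D r" "D \<le> U" using der rT cT by force
        have "f c - f r = D * (c - r)" using delta_exact[OF D(1) rT(1)] fjr by simp
        also have "\<dots> \<le> K * (c - r)" using D(2) rc e by (intro mult_right_mono) (auto simp: K_def)
        finally have "f c - f r \<le> K * (c - r)" .
        moreover have "r \<in> L \<or> r = a"
          using rT rc by (auto simp: L_def)
        then have "f r - f a \<le> K * (r - a)"
          using good rT rc by auto
        ultimately have "f c - f a \<le> K * (c - a)" by (simp add: algebra_simps)
        then show False using cbad by simp
      qed
    qed
  qed
  have "f b - f a - U * (b - a) \<le> 0"
    by (rule le_of_eps[of _ "b - a"]) (use main a in \<open>auto simp: algebra_simps\<close>)
  then show ?thesis by simp
qed



lemma integrable_comp_mono: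
  fixes g xe :: "real \<Rightarrow> real"
  assumes "mono g" "continuous_on UNIV xe" "\<And>u. a \<le> u \<Longrightarrow> u \<le> b \<Longrightarrow> g u \<in> {g a..b}"
  shows "(\<lambda>u. xe (g u)) integrable_on {a..b}"
proof -
  have m: "(\<lambda>u. xe (g u)) \<in> borel_measurable borel"
    using measurable_compose[OF borel_measurable_mono[OF assms(1)] borel_measurable_continuous_onI[OF assms(2)]] by simp
  then have m2: "(\<lambda>u. xe (g u)) \<in> borel_measurable (lebesgue_on {a..b})"
    by (metis measurable_lborel2 measurable_restrict_space1 measurable_completion)
  have "compact (xe ` {g a..b})" by (rule compact_continuous_image) (use assms(2) continuous_on_subset in auto)
  then obtain Bd where Bd: "\<forall>y\<in>xe ` {g a..b}. norm y \<le> Bd" using compact_imp_bounded bounded_iff by metis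
  have Bd2: "\<forall>u. a \<le> u \<and> u \<le> b \<longrightarrow> norm (xe (g u)) \<le> Bd" using Bd assms(3) by blast
  have "integrable (lebesgue_on {a..b}) (\<lambda>u. xe (g u))"
  proof (rule finite_measure.integrable_const_bound[where B=Bd])
    show "finite_measure (lebesgue_on {a..b})" by (rule finite_measure_lebesgue_on) simp
    show "AE x in lebesgue_on {a..b}. norm (xe (g x)) \<le> Bd"
      using Bd2 by auto
  qed (rule m2)
  then show ?thesis by (rule integrable_on_lebesgue_on) simp
qed

lemma integral_approx:
  fixes h :: "real \<Rightarrow> real"
  assumes "p \<le> q" "h integrable_on {p..q}" "\<epsilon> \<ge> 0"
    "\<And>u. p \<le> u \<Longrightarrow> u \<le> q \<Longrightarrow> u \<noteq> \<sigma> \<Longrightarrow> \<bar>h u - c\<bar> \<le> \<epsilon>"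
  shows "\<bar>integral {p..q} h - c * (q - p)\<bar> \<le> \<epsilon> * (q - p)"
proof -
  define h' where "h' u = (if u = \<sigma> then c else h u)" for u
  have eq: "integral {p..q} h = integral {p..q} h'"
    by (rule integral_spike[of "{\<sigma>}"]) (auto simp: h'_def)
  have ih': "h' integrable_on {p..q}"
    by (rule integrable_spike[OF assms(2), of "{\<sigma>}"]) (auto simp: h'_def)
  have "((\<lambda>u. h' u - c) has_integral (integral {p..q} h' - c * (q - p))) {p..q}"
    using has_integral_diff[OF integrable_integral[OF ih'] has_integral_const_real[of c p q]] assms(1)
    by (simp add: mult.commute)
  then have "norm (integral {p..q} h' - c * (q - p)) \<le> \<epsilon> * measure lborel (cbox p q)"
    by (intro has_integral_bound[where f="\<lambda>u. h' u - c"]) (use assms in \<open>auto simp: h'_def\<close>)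
  then show ?thesis using eq assms(1) by simp
qed

lemma interval_F:
  fixes h :: "real \<Rightarrow> real"
  assumes hint: "\<And>a b. h integrable_on {a..b}" and ab: "a \<le> b"
  shows "(integral {0..b} h - integral {b..0} h) - (integral {0..a} h - integral {a..0} h) = integral {a..b} h"
proof -
  have z1: "integral {t..0} h = 0" if "t \<ge> 0" for t :: real
    using that by (cases "t = 0") auto
  have z2: "integral {0..t} h = 0" if "t \<le> 0" for t :: real
    using that by (cases "t = 0") auto
  show ?thesis
  proof (cases "0 \<le> a")
    case True
    then show ?thesis using Henstock_Kurzweil_Integration.integral_combine[OF True ab hint] z1[of a] z1[of b] ab by simp
  next
    case False
    show ?thesis
    proof (cases "0 \<le> b")
      case True
      then show ?thesis using Henstock_Kurzweil_Integration.integral_combine[of a 0 b, OF _ True hint] False z1[of b] z2[of a] by simp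
    next
      case False2: False
      then show ?thesis using Henstock_Kurzweil_Integration.integral_combine[of a b 0, OF ab _ hint] False z2[of a] z2[of b] by simp
    qed
  qed
qed

lemma antideriv_exists:
  assumes cl: "closed TS" and up: "\<forall>t\<in>TS. \<exists>s\<in>TS. s > t" and lo: "\<forall>u. \<exists>v\<in>TS. v \<le> u"
    and cont: "continuous_on TS x"
  shows "\<exists>F. \<forall>t\<in>TS. has_delta_derivative TS F (x t) t"
proof -
  have clU: "closedin (top_of_set UNIV) TS" using cl by simp
  obtain xe where xe: "continuous_on UNIV xe" "\<And>v. v \<in> TS \<Longrightarrow> xe v = x v"
    using Tietze_unbounded[OF cont clU] by blast
  define g where "g u = Sup {v\<in>TS. v \<le> u}" for u
  have gp: "g u \<in> TS" "g u \<le> u" "\<And>v. v \<in> TS \<Longrightarrow> v \<le> u \<Longrightarrow> v \<le> g u" for u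
  proof -
    let ?S = "{v\<in>TS. v \<le> u}"
    have ne: "?S \<noteq> {}" using lo by auto
    have ba: "bdd_above ?S" by (rule bdd_aboveI[of _ u]) auto
    show "g u \<le> u" unfolding g_def by (rule cSup_least[OF ne]) auto
    show "\<And>v. v \<in> TS \<Longrightarrow> v \<le> u \<Longrightarrow> v \<le> g u" unfolding g_def by (rule cSup_upper) (auto intro: ba)
    have "Sup ?S \<in> closure ?S" by (rule closure_contains_Sup[OF ne ba])
    also have "closure ?S \<subseteq> TS" using cl by (metis (no_types, lifting) closure_minimal mem_Collect_eq subsetI)
    finally show "g u \<in> TS" unfolding g_def .
  qed
  have mono: "mono g" by (rule monoI) (meson gp order_trans)
  define h where "h u = xe (g u)" for u
  have hint: "h integrable_on {a..b}" for a b
    unfolding h_def by (rule integrable_comp_mono[OF mono xe(1)]) (meson gp(2) monoD[OF mono] order_trans atLeastAtMost_iff)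
  define F where "F t = integral {0..t} h - integral {t..0} h" for t
  have Fab: "F b - F a = integral {a..b} h" if "a \<le> b" for a b
    unfolding F_def by (rule interval_F[OF hint that])
  have "has_delta_derivative TS F (x t) t" if t: "t \<in> TS" for t
    unfolding has_delta_derivative_def
  proof (intro allI impI)
    fix \<epsilon> :: real assume \<epsilon>: "\<epsilon> > 0"
    define \<sigma> where "\<sigma> = fjump TS t"
    have \<sigma>T: "\<sigma> \<in> TS" "t \<le> \<sigma>" "\<And>v. v \<in> TS \<Longrightarrow> v > t \<Longrightarrow> \<sigma> \<le> v"
      using fjump_props[OF cl t] up t unfolding \<sigma>_def by auto
    obtain \<delta>c where \<delta>c: "\<delta>c > 0" "\<forall>v\<in>TS. \<bar>v - t\<bar> < \<delta>c \<longrightarrow> \<bar>x v - x t\<bar> \<le> \<epsilon>"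
    proof -
      obtain d where "d > 0" "\<forall>v\<in>TS. dist v t < d \<longrightarrow> dist (x v) (x t) < \<epsilon>"
        using cont t \<epsilon> unfolding continuous_on_iff by blast
      then show ?thesis using that[of d] by (auto simp: dist_real_def less_imp_le)
    qed
    define \<delta> where "\<delta> = (if \<sigma> > t then min \<delta>c (\<sigma> - t) else \<delta>c)"
    have \<delta>pos: "\<delta> > 0" using \<delta>c by (auto simp: \<delta>_def)
    show "\<exists>\<delta>>0. \<forall>s\<in>TS. \<bar>s - t\<bar> < \<delta> \<longrightarrow> \<bar>F (fjump TS t) - F s - x t * (fjump TS t - s)\<bar> \<le> \<epsilon> * \<bar>fjump TS t - s\<bar>"
    proof (intro exI conjI ballI impI)
      show "\<delta> > 0" by (rule \<delta>pos)
      fix s assume s: "s \<in> TS" "\<bar>s - t\<bar> < \<delta>"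
      have \<delta>le: "\<delta> \<le> \<delta>c" by (simp add: \<delta>_def)
      have pt: "\<bar>h u - x t\<bar> \<le> \<epsilon>" if u: "min s \<sigma> \<le> u" "u \<le> max s \<sigma>" "u \<noteq> \<sigma>" for u
      proof -
        have "\<bar>g u - t\<bar> < \<delta>c"
        proof (cases "s \<le> \<sigma>")
          case True
          then have us: "s \<le> u" "u < \<sigma>" using u by auto
          have "s \<le> g u" using gp(3)[OF s(1) us(1)] .
          moreover have "g u \<le> t"
          proof (rule ccontr)
            assume "\<not> g u \<le> t"
            then have "\<sigma> \<le> g u" using \<sigma>T(3)[OF gp(1)] by simp
            then show False using gp(2)[of u] us by simp
          qed
          ultimately show ?thesis using s \<delta>le by auto
        next
          case False
          have "\<sigma> = t"
          proof (rule ccontr)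
            assume "\<sigma> \<noteq> t"
            then have "\<sigma> > t" using \<sigma>T by simp
            then have "s < \<sigma>" using s by (auto simp: \<delta>_def)
            then show False using False by simp
          qed
          then have us: "t \<le> u" "u \<le> s" using u False by auto
          have "t \<le> g u" using gp(3)[OF t us(1)] .
          moreover have "g u \<le> s" using gp(2)[of u] us by simp
          ultimately show ?thesis using s \<delta>le by auto
        qed
        then have "\<bar>x (g u) - x t\<bar> \<le> \<epsilon>" using \<delta>c(2) gp(1) by blast
        then show ?thesis by (simp add: h_def xe(2)[OF gp(1)])
      qed
      show "\<bar>F (fjump TS t) - F s - x t * (fjump TS t - s)\<bar> \<le> \<epsilon> * \<bar>fjump TS t - s\<bar>"
        unfolding \<sigma>_def[symmetric]
      proof (cases "s \<le> \<sigma>")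
        case True
        have "\<bar>integral {s..\<sigma>} h - x t * (\<sigma> - s)\<bar> \<le> \<epsilon> * (\<sigma> - s)"
          by (rule integral_approx[OF True hint less_imp_le[OF \<epsilon>], of \<sigma>]) (use pt True in auto)
        then show "\<bar>F \<sigma> - F s - x t * (\<sigma> - s)\<bar> \<le> \<epsilon> * \<bar>\<sigma> - s\<bar>" using Fab[OF True] True by simp
      next
        case False
        then have Fl: "\<sigma> \<le> s" by simp
        have "\<bar>integral {\<sigma>..s} h - x t * (s - \<sigma>)\<bar> \<le> \<epsilon> * (s - \<sigma>)"
          by (rule integral_approx[OF Fl hint less_imp_le[OF \<epsilon>], of \<sigma>]) (use pt Fl in auto)
        moreover have "F \<sigma> - F s = - integral {\<sigma>..s} h" using Fab[OF Fl] by simp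
        ultimately show "\<bar>F \<sigma> - F s - x t * (\<sigma> - s)\<bar> \<le> \<epsilon> * \<bar>\<sigma> - s\<bar>" using Fl
          by (simp add: abs_minus_commute algebra_simps)
      qed
    qed
  qed
  then show ?thesis by blast
qed



lemma per_props:
  assumes T: "T > 0" and ts: "time_scale TS" and p: "periodic_ts TS T"
  shows "closed TS" "\<And>t. t \<in> TS \<Longrightarrow> t + T \<in> TS" "\<forall>t\<in>TS. \<exists>s\<in>TS. s > t"
    "tkappa TS = TS"
proof -
  show cl: "closed TS" using ts by (simp add: time_scale_def)
  show pl: "\<And>t. t \<in> TS \<Longrightarrow> t + T \<in> TS" using p unfolding periodic_ts_def by blast
  show up: "\<forall>t\<in>TS. \<exists>s\<in>TS. s > t" using pl T by (meson less_add_same_cancel1)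
  show "tkappa TS = TS" unfolding tkappa_def using up by (auto simp: not_le)
qed

lemma per_lo:
  assumes T: "T > 0" and p: "periodic_ts TS T" and z: "0 \<in> TS"
  shows "\<forall>u. \<exists>v\<in>TS. v \<le> u"
proof
  fix u :: real
  have mi: "t - T \<in> TS" if "t \<in> TS" for t
  proof -
    from that p obtain s where "s \<in> TS" "t = s + T" unfolding periodic_ts_def by blast
    then show ?thesis by simp
  qed
  have n: "- (real n * T) \<in> TS" for n
  proof (induction n)
    case 0 then show ?case using z by simp
  next
    case (Suc n)
    have "- (real (Suc n) * T) = - (real n * T) - T" by (simp add: algebra_simps)
    then show ?case using mi[OF Suc] by simp
  qed
  obtain n where "-u < real n * T" using reals_Archimedean3[OF T] by blast
  then show "\<exists>v\<in>TS. v \<le> u" using n[of n] by (intro bexI[of _ "- (real n * T)"]) auto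
qed

lemma delta_mvt_abs:
  assumes cl: "closed TS" and up: "\<forall>t\<in>TS. \<exists>s\<in>TS. s > t"
    and a: "a \<in> TS" "b \<in> TS" "a \<le> b"
    and der: "\<And>t. t \<in> TS \<Longrightarrow> a \<le> t \<Longrightarrow> t \<le> b \<Longrightarrow> has_delta_derivative TS f (d t) t \<and> \<bar>d t\<bar> \<le> M"
  shows "\<bar>f b - f a\<bar> \<le> M * (b - a)"
proof -
  have "f b - f a \<le> M * (b - a)"
    by (rule delta_mvt_upper[OF cl up a]) (use der in \<open>force\<close>)
  moreover have "(- f b) - (- f a) \<le> M * (b - a)"
    by (rule delta_mvt_upper[OF cl up a, of "\<lambda>x. - f x"]) (use der delta_neg in \<open>force\<close>)
  ultimately show ?thesis by linarith
qed

theorem mainTheorem2: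
  fixes TS :: "real set" and T :: real
  assumes "T > 0" and "time_scale TS" and "periodic_ts TS T" and "0 \<in> TS"
  shows "(\<forall>x\<in>C1T TS T.
            sup_norm TS T (\<lambda>t. x t - ts_mean TS T x) \<le> T / 2 * sup_norm TS T (delta_deriv TS x))
         \<and> k_const TS T \<le> T / 2"
proof -
  note pp = per_props[OF assms(1,2,3)]
  note cl = pp(1) and up = pp(3) and tk = pp(4)
  have lo: "\<forall>u. \<exists>v\<in>TS. v \<le> u" by (rule per_lo[OF assms(1,3,4)])
  have TT: "T \<in> TS" using pp(2)[OF assms(4)] by simp
  define K where "K = {0..T} \<inter> TS"
  have cK: "compact K" unfolding K_def by (rule compact_Int_closed) (auto simp: cl)
  have K0: "0 \<in> K" "T \<in> K" using assms(1,4) TT by (auto simp: K_def)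
  have main: "sup_norm TS T (\<lambda>t. x t - ts_mean TS T x) \<le> T / 2 * sup_norm TS T (delta_deriv TS x)"
    if xC: "x \<in> C1T TS T" for x
  proof -
    have xc: "continuous_on TS x" and xp: "\<And>t. t \<in> TS \<Longrightarrow> x (t + T) = x t"
      and xd: "\<And>t. t \<in> TS \<Longrightarrow> \<exists>D. has_delta_derivative TS x D t"
      and dc: "continuous_on TS (delta_deriv TS x)"
      using xC tk unfolding C1T_def by auto
    define dd where "dd = delta_deriv TS x"
    have der: "\<And>t. t \<in> TS \<Longrightarrow> has_delta_derivative TS x (dd t) t"
      unfolding dd_def delta_deriv_def using xd by (rule someI_ex)
    have "compact ((\<lambda>t. \<bar>dd t\<bar>) ` K)"
      by (rule compact_continuous_image) (use dc cK in \<open>auto simp: dd_def K_def intro!: continuous_intros elim: continuous_on_subset\<close>)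
    then have bdd: "bdd_above ((\<lambda>t. \<bar>dd t\<bar>) ` K)" by (auto intro: bounded_imp_bdd_above compact_imp_bounded)
    define M where "M = sup_norm TS T dd"
    have Mb: "\<And>t. t \<in> K \<Longrightarrow> \<bar>dd t\<bar> \<le> M"
      unfolding M_def sup_norm_def K_def[symmetric] by (rule cSup_upper) (auto intro: bdd)
    have M0: "M \<ge> 0" using Mb[OF K0(1)] by simp
    have lip: "\<bar>x b - x a\<bar> \<le> M * (b - a)" if "a \<in> K" "b \<in> K" "a \<le> b" for a b
      by (rule delta_mvt_abs[OF cl up _ _ \<open>a \<le> b\<close>, where d=dd]) (use that der Mb in \<open>auto simp: K_def\<close>)
    have osc: "\<bar>x t - x s\<bar> \<le> M * T / 2" if "s \<in> K" "t \<in> K" "s \<le> t" for s t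
    proof (cases "t - s \<le> T / 2")
      case True
      have "\<bar>x t - x s\<bar> \<le> M * (t - s)" by (rule lip[OF that])
      also have "\<dots> \<le> M * (T/2)" using True M0 by (intro mult_left_mono) auto
      finally show ?thesis by simp
    next
      case False
      have "\<bar>x T - x t\<bar> \<le> M * (T - t)" by (rule lip) (use that K0 in \<open>auto simp: K_def\<close>)
      moreover have "\<bar>x s - x 0\<bar> \<le> M * (s - 0)" by (rule lip) (use that K0 in \<open>auto simp: K_def\<close>)
      moreover have "x T = x 0" using xp[OF assms(4)] by simp
      moreover have "M * (T - t) + M * s \<le> M * (T/2)"
      proof -
        have "M * (T - t) + M * s = M * (T - (t - s))" by (simp add: algebra_simps)
        also have "\<dots> \<le> M * (T/2)" using False M0 by (intro mult_left_mono) auto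
        finally show ?thesis .
      qed
      moreover have "M * (T/2) = M * T / 2" "M * (s - 0) = M * s" by simp_all
      ultimately show ?thesis by linarith
    qed
    have osc2: "\<bar>x t - x s\<bar> \<le> M * T / 2" if "s \<in> K" "t \<in> K" for s t
      using osc[OF that] osc[OF that(2,1)] by (cases "s \<le> t") (auto simp: abs_minus_commute)
    have xcK: "continuous_on K x" using xc by (rule continuous_on_subset) (auto simp: K_def)
    obtain tM where tM: "tM \<in> K" "\<And>t. t \<in> K \<Longrightarrow> x t \<le> x tM"
      using continuous_attains_sup[OF cK _ xcK] K0 by blast
    obtain tm where tm: "tm \<in> K" "\<And>t. t \<in> K \<Longrightarrow> x tm \<le> x t"
      using continuous_attains_inf[OF cK _ xcK] K0 by blast
    obtain F0 where "\<forall>t\<in>TS. has_delta_derivative TS F0 (x t) t"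
      using antideriv_exists[OF cl up lo xc] by blast
    then have "\<exists>I F. delta_antideriv TS F x \<and> I = F T - F 0"
      unfolding delta_antideriv_def tk by blast
    then have "\<exists>F. delta_antideriv TS F x \<and> delta_integral TS x 0 T = F T - F 0"
      unfolding delta_integral_def by (rule someI_ex)
    then obtain F where F: "\<And>t. t \<in> TS \<Longrightarrow> has_delta_derivative TS F (x t) t"
      and I: "delta_integral TS x 0 T = F T - F 0"
      unfolding delta_antideriv_def tk by blast
    have up1: "F T - F 0 \<le> x tM * (T - 0)"
      by (rule delta_mvt_upper[OF cl up assms(4) TT]) (use assms(1) F tM in \<open>auto simp: K_def\<close>)
    have lo1: "(- F T) - (- F 0) \<le> (- x tm) * (T - 0)"
      by (rule delta_mvt_upper[OF cl up assms(4) TT]) (use F tm in \<open>auto simp: K_def intro!: exI[of _ "- x _"] delta_neg\<close>)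
    define m where "m = ts_mean TS T x"
    have mdef: "m = (F T - F 0) / T" unfolding m_def ts_mean_def I ..
    have mM: "m \<le> x tM" using up1 assms(1) by (simp add: mdef divide_le_eq mult.commute)
    have mm: "x tm \<le> m" using lo1 assms(1) by (simp add: mdef le_divide_eq mult.commute)
    have pt: "\<bar>x t - m\<bar> \<le> T / 2 * M" if "t \<in> K" for t
    proof -
      have "x t - m \<le> x t - x tm" using mm by simp
      also have "\<dots> \<le> M * T / 2" using osc2[OF tm(1) that] by linarith
      finally have 1: "x t - m \<le> M * T / 2" .
      have "m - x t \<le> x tM - x t" using mM by simp
      also have "\<dots> \<le> M * T / 2" using osc2[OF that tM(1)] by linarith
      finally have 2: "m - x t \<le> M * T / 2" .
      have "T / 2 * M = M * T / 2" by simp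
      with 1 2 show ?thesis by linarith
    qed
    show ?thesis
      unfolding m_def[symmetric] M_def[symmetric] dd_def[symmetric]
      unfolding sup_norm_def K_def[symmetric]
      by (rule cSup_least) (use K0 pt in \<open>auto simp: M_def dd_def sup_norm_def K_def\<close>)
  qed
  moreover have "k_const TS T \<le> T / 2"
    unfolding k_const_def
    by (rule cInf_lower) (use main assms(1) in \<open>auto intro: bdd_belowI[of _ 0]\<close>)
  ultimately show ?thesis by blast
qed

end
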